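(* For integers $n\ge0$ and $0\le i\le n/2$ let $g(i,n)=\binom{2(n-i)}{n-i}^2\binom{n-i}{i}$. Let $p$ be an odd prime, $m,r$ positive integers, and $j$ an integer with $0\le j\le mp^{r-1}/2$. Then $$g(jp,mp^r)\equiv g(j,mp^{r-1})\pmod{p^r}.$$ *)

theory Defs
  imports "HOL-Number_Theory.Number_Theory"
begin

definition g :: "nat \<Rightarrow> nat \<Rightarrow> nat" where
  "g i n = ((2 * (n - i)) choose (n - i))^2 * ((n - i) choose i)"

end

theory Submission
  imports Defs
begin


definition PP :: "nat \<Rightarrow> nat \<Rightarrow> nat" where
  "PP p t = (\<Prod>i\<in>{1..<p}. p*t+i)"
definition FF :: "nat \<Rightarrow> nat \<Rightarrow> nat" where
  "FF p a = (\<Prod>t<a. PP p t)"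

lemma fact_add_prod: "fact (x + k) = (fact x :: nat) * (\<Prod>i\<in>{1..k}. x+i)"
proof (induction k)
  case 0 then show ?case by simp
next
  case (Suc k)
  have "fact (x + Suc k) = (x + Suc k) * (fact (x+k) :: nat)" by simp
  also have "\<dots> = fact x * (\<Prod>i\<in>{1..Suc k}. x+i)"
  proof -
    have "{1..Suc k} = insert (Suc k) {1..k}" by auto
    then show ?thesis using Suc by (simp add: ac_simps)
  qed
  finally show ?case .
qed

lemma fact_mult_p: assumes "p > 0" shows "fact (p*a) = p^a * fact a * FF p a"
proof (induction a)
  case 0 then show ?case by (simp add: FF_def)
next
  case (Suc a)
  have s: "{1..p} = insert p {1..<p}" using assms by auto
  have "fact (p * Suc a) = (fact (p*a) :: nat) * (\<Prod>i\<in>{1..p}. p*a+i)"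
    using fact_add_prod[of "p*a" p] by (simp add: add.commute)
  also have "(\<Prod>i\<in>{1..p}. p*a+i) = (p*a+p) * PP p a"
    unfolding s PP_def by simp
  finally show ?case using Suc by (simp add: FF_def algebra_simps)
qed

lemma not_dvd_PP: assumes "prime p" shows "\<not> p dvd PP p t"
proof
  assume "p dvd PP p t"
  then obtain i where i: "i \<in> {1..<p}" "p dvd p*t+i"
    using assms unfolding PP_def by (auto simp: prime_dvd_prod_iff)
  then have "p dvd i" by (simp add: dvd_add_right_iff)
  with i show False by (auto dest: dvd_imp_le)
qed

lemma not_dvd_FF: assumes "prime p" shows "\<not> p dvd FF p a"
  using not_dvd_PP[OF assms] assms unfolding FF_def by (auto simp: prime_dvd_prod_iff)

lemma coprime_FF: assumes "prime p" shows "coprime (FF p a) (p^k)"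
  using not_dvd_FF[OF assms] assms
  by (metis coprime_commute coprime_power_right_iff prime_imp_coprime)

lemma FF_add: "FF p (a+b) = FF p a * (\<Prod>t<b. PP p (a+t))"
  by (induction b) (simp_all add: FF_def)

lemma PP_shift: "[PP p (c*p^s + t) = PP p t] (mod p^Suc s)"
  unfolding PP_def
proof (rule cong_prod)
  fix i assume "i \<in> {1..<p}"
  have "p*(c*p^s+t)+i = (p*t+i) + c*p^Suc s" by (simp add: algebra_simps)
  moreover have "[(p*t+i) + c*p^Suc s = p*t+i] (mod p^Suc s)"
    unfolding cong_def by simp
  ultimately show "[p*(c*p^s+t)+i = p*t+i] (mod p^Suc s)" by (simp only:)
qed

lemma FF_block: "[FF p (c*p^s) = (FF p (p^s))^c] (mod p^Suc s)"
proof (induction c)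
  case 0 then show ?case by (simp add: FF_def)
next
  case (Suc c)
  have "FF p (Suc c * p^s) = FF p (c*p^s) * (\<Prod>t<p^s. PP p (c*p^s+t))"
    using FF_add[of p "c*p^s" "p^s"] by (simp add: add.commute)
  moreover have "[(\<Prod>t<p^s. PP p (c*p^s+t)) = (\<Prod>t<p^s. PP p t)] (mod p^Suc s)"
    by (rule cong_prod) (rule PP_shift)
  moreover have "(\<Prod>t<p^s. PP p t) = FF p (p^s)" by (simp add: FF_def)
  ultimately show ?case using Suc by (metis cong_mult power_Suc2)
qed



lemma mult_fact_rec:
  assumes p: "prime p"
  shows "multiplicity p (fact x :: nat) = x div p + multiplicity p (fact (x div p) :: nat)"
proof -
  define a where "a = x div p"
  define b where "b = x mod p"
  have p0: "p > 0" using p prime_gt_0_nat by blast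
  have x: "x = p*a + b" unfolding a_def b_def by simp
  have bp: "b < p" unfolding b_def using p0 by simp
  define R where "R = (\<Prod>i\<in>{1..b}. p*a+i)"
  have "fact x = (fact (p*a) :: nat) * R" unfolding R_def x by (rule fact_add_prod)
  also have "\<dots> = p^a * fact a * FF p a * R" using fact_mult_p[OF p0] by simp
  finally have fx: "fact x = p^a * fact a * FF p a * R" .
  have nR: "\<not> p dvd R"
  proof
    assume "p dvd R"
    then obtain i where i: "i \<in> {1..b}" "p dvd p*a+i"
      using p unfolding R_def by (auto simp: prime_dvd_prod_iff)
    then have "p dvd i" by (simp add: dvd_add_right_iff)
    with i bp show False by (auto dest: dvd_imp_le)
  qed
  have R0: "R \<noteq> 0" using nR by (metis dvd_0_right)
  have F0: "FF p a \<noteq> 0" using not_dvd_FF[OF p] by (metis dvd_0_right)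
  have pe: "prime_elem p" using p by simp
  have "multiplicity p (fact x :: nat) = multiplicity p (p^a) + multiplicity p (fact a :: nat)
      + multiplicity p (FF p a) + multiplicity p R"
    unfolding fx using R0 F0 p0
    by (simp add: prime_elem_multiplicity_mult_distrib[OF pe])
  also have "\<dots> = a + multiplicity p (fact a :: nat)"
    using multiplicity_prime_power[OF pe] not_dvd_FF[OF p] nR
    by (simp add: not_dvd_imp_multiplicity_0)
  finally show ?thesis unfolding a_def .
qed

lemma legendre:
  assumes p: "prime p"
  shows "x < p^K \<Longrightarrow> multiplicity p (fact x :: nat) = (\<Sum>i<K. x div p^Suc i)"
proof (induction K arbitrary: x)
  case 0
  then show ?case by simp
next
  case (Suc K)
  have p0: "p > 0" using p prime_gt_0_nat by blast
  have "x div p < p^K" using Suc.prems p0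
    by (simp add: div_less_iff_less_mult mult.commute)
  then have "multiplicity p (fact (x div p) :: nat) = (\<Sum>i<K. x div p div p^Suc i)"
    by (rule Suc.IH)
  also have "\<dots> = (\<Sum>i<K. x div p^Suc (Suc i))"
    by (simp add: div_mult2_eq)
  finally show ?case using mult_fact_rec[OF p, of x]
    by (simp only: sum.lessThan_Suc_shift) simp
qed

lemma level:
  fixes q n j :: nat
  assumes q: "q > 0" and jn: "j \<le> n"
  shows "n div q + j div q + (n-j) div q + (if q dvd (n+j) \<and> \<not> q dvd j then 1 else 0) \<le> (2*n) div q"
proof -
  have e1: "(2*n) div q = n div q + n div q + (n mod q + n mod q) div q"
    using div_add1_eq[of n n q] by (simp add: mult_2)
  have e2: "n div q = j div q + (n-j) div q + (j mod q + (n-j) mod q) div q"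
    using div_add1_eq[of j "n-j" q] jn by simp
  show ?thesis
  proof (cases "q dvd (n+j) \<and> \<not> q dvd j")
    case False
    then have "(if q dvd (n+j) \<and> \<not> q dvd j then 1 else 0) = (0::nat)" by simp
    then show ?thesis using e1 e2 by linarith
  next
    case True
    define x where "x = n mod q"
    define b where "b = j mod q"
    define y where "y = (n-j) mod q"
    have xq: "x < q" "b < q" "y < q" using q by (simp_all add: x_def b_def y_def)
    have b0: "b > 0"
    proof (rule ccontr)
      assume "\<not> b > 0"
      then have "j mod q = 0" by (simp add: b_def)
      then have "q dvd j" by (rule mod_0_imp_dvd)
      with True show False by simp
    qed
    have "(x + b) mod q = 0" using True unfolding x_def b_def
      by (simp add: mod_add_eq mod_eq_0_iff_dvd)
    then have xb: "x + b = q"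
    proof -
      assume h: "(x + b) mod q = 0"
      show ?thesis
      proof (cases "x + b < q")
        case True then show ?thesis using h b0 by simp
      next
        case False
        then have "(x+b) mod q = (x + b - q) mod q" by (simp add: le_mod_geq)
        also have "\<dots> = x + b - q" using xq by (intro mod_less) linarith
        finally have "(x+b) mod q = x + b - q" .
        then show ?thesis using h False xq by linarith
      qed
    qed
    have "1 \<le> (x + x) div q + (b + y) div q"
    proof (rule ccontr)
      assume "\<not> ?thesis"
      then have "(x+x) div q = 0" "(b+y) div q = 0" by linarith+
      then have c1: "x + x < q" and c2: "b + y < q" using q
        by (simp_all add: div_eq_0_iff)
      have "x = (b + y) mod q" unfolding x_def b_def y_def using jn
        by (metis le_add_diff_inverse mod_add_eq)
      then have "x = b + y" using c2 by simp
      then show False using c1 xb by linarith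
    qed
    moreover have "(if q dvd (n+j) \<and> \<not> q dvd j then 1 else 0) = (1::nat)" using True by simp
    ultimately show ?thesis using e1 e2 unfolding x_def b_def y_def by linarith
  qed
qed



lemma binom_dvd:
  fixes p n j s R :: nat
  assumes p: "prime p" and jn: "j \<le> n" and sR: "s \<le> R"
    and lv: "\<And>i. s < i \<Longrightarrow> i \<le> R \<Longrightarrow> p^i dvd (n+j) \<and> \<not> p^i dvd j"
  shows "p^(R - s) dvd ((2*n) choose n) * (n choose j)"
proof -
  define M where "M = ((2*n) choose n) * (n choose j)"
  have M0: "M \<noteq> 0" unfolding M_def using jn by simp
  have "fact (2*n) = (fact n * fact n * ((2*n) choose n) :: nat)"
    using binomial_fact_lemma[of n "2*n"] by simp
  also have "\<dots> = fact n * (fact j * fact (n-j) * (n choose j)) * ((2*n) choose n)"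
    using binomial_fact_lemma[OF jn] by (simp only:)
  finally have ff: "fact (2*n) = fact n * fact j * fact (n-j) * (M::nat)"
    unfolding M_def by (simp add: ac_simps)
  have pe: "prime_elem p" using p by simp
  have nz: "fact x \<noteq> (0::nat)" for x by simp
  have mm: "multiplicity p (fact (2*n) :: nat) = multiplicity p (fact n :: nat)
     + multiplicity p (fact j :: nat) + multiplicity p (fact (n-j) :: nat) + multiplicity p M"
    unfolding ff using M0 by (simp add: prime_elem_multiplicity_mult_distrib[OF pe])
  define K where "K = 2*n + R"
  have p2: "p \<ge> 2" using p prime_ge_2_nat by blast
  have big: "x < p^K" if "x \<le> 2*n" for x
  proof -
    have "x < 2^K" using that less_exp[of K] unfolding K_def by linarith
    also have "(2::nat)^K \<le> p^K" using p2 by (simp add: power_mono)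
    finally show ?thesis .
  qed
  let ?ind = "\<lambda>i::nat. (if s \<le> i \<and> i < R then 1 else 0) :: nat"
  have "(\<Sum>i<K. n div p^Suc i + j div p^Suc i + (n-j) div p^Suc i + ?ind i)
      \<le> (\<Sum>i<K. (2*n) div p^Suc i)"
  proof (rule sum_mono)
    fix i assume "i \<in> {..<K}"
    have q: "p^Suc i > 0" using p2 by simp
    have "?ind i \<le> (if p^Suc i dvd (n+j) \<and> \<not> p^Suc i dvd j then 1 else 0)"
      using lv[of "Suc i"] by auto
    then show "n div p^Suc i + j div p^Suc i + (n-j) div p^Suc i + ?ind i \<le> (2*n) div p^Suc i"
      using level[OF q jn] by linarith
  qed
  moreover have "(\<Sum>i<K. ?ind i) = R - s"
  proof -
    have "(\<Sum>i<K. ?ind i) = (\<Sum>i\<in>{i\<in>{..<K}. s \<le> i \<and> i < R}. 1)"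
      by (subst sum.inter_filter) auto
    also have "{i\<in>{..<K}. s \<le> i \<and> i < R} = {s..<R}" unfolding K_def by auto
    finally show ?thesis by simp
  qed
  ultimately have "multiplicity p (fact n :: nat) + multiplicity p (fact j :: nat)
      + multiplicity p (fact (n-j) :: nat) + (R - s) \<le> multiplicity p (fact (2*n) :: nat)"
    using legendre[OF p big[of n]] legendre[OF p big[of j]] legendre[OF p big[of "n-j"]]
      legendre[OF p big[of "2*n"]] jn
    by (simp add: sum.distrib)
  then have "R - s \<le> multiplicity p M" using mm by linarith
  then show ?thesis unfolding M_def by (rule multiplicity_dvd')
qed

lemma my_alg:
  fixes B A Pa Pb Pj Pnj fn fj fnj fb Fn Fj Fnj Fb :: nat
  assumes h1: "B * ((Pa*fn*Fn)^4 * (Pj*fj*Fj) * (Pnj*fnj*Fnj)) = (Pb*fb*Fb)^2 * (Pa*fn*Fn)"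
    and h2: "A*(fn^4*fj*fnj) = fb^2*fn" and h3: "Pj*Pnj = Pa" and h4: "Pb = Pa*Pa"
    and nz: "Pa \<noteq> 0" "fn \<noteq> 0" "fj \<noteq> 0" "fnj \<noteq> 0" "Fn \<noteq> 0"
  shows "B*(Fn^3*Fj*Fnj) = A*Fb^2"
proof -
  define Z where "Z = Pa^5 * fn^4 * fj * fnj * Fn"
  have "B*(Fn^3*Fj*Fnj) * Z = B * ((Pa*fn*Fn)^4 * (Pj*fj*Fj) * (Pnj*fnj*Fnj))"
    unfolding Z_def h3[symmetric] by (simp add: algebra_simps power_mult_distrib eval_nat_numeral)
  also have "\<dots> = (Pb*fb*Fb)^2 * (Pa*fn*Fn)" by (rule h1)
  also have "\<dots> = (A*(fn^4*fj*fnj)) * Fb^2 * Pa^5 * Fn"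
    unfolding h2 h4 by (simp add: algebra_simps power_mult_distrib eval_nat_numeral)
  also have "\<dots> = A*Fb^2 * Z" unfolding Z_def by (simp add: algebra_simps)
  finally show ?thesis using nz unfolding Z_def by simp
qed



theorem mainTheorem15:
  fixes p m r j :: nat
  assumes "prime p" and "odd p" and "m > 0" and "r > 0"
    and "2 * j \<le> m * p ^ (r - 1)"
  shows "[g (j * p) (m * p ^ r) = g j (m * p ^ (r - 1))] (mod p ^ r)"
proof -
  have p: "prime p" by fact
  have p0: "p > 0" using p prime_gt_0_nat by blast
  have p2: "p \<ge> 2" using p prime_ge_2_nat by blast
  define R where "R = r - 1"
  have rR: "r = Suc R" unfolding R_def using assms(4) by simp
  define N where "N = m * p^R"
  define n where "n = N - j"
  have jn: "j \<le> n" using assms(5) unfolding n_def N_def R_def by linarith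
  have nj: "n + j = N" using assms(5) unfolding n_def N_def R_def by linarith
  define s where "s = (if j = 0 then R else min (multiplicity p j) R)"
  have sR: "s \<le> R" unfolding s_def by simp
  have psj: "p^s dvd j"
    by (cases "j = 0") (auto simp: s_def intro!: multiplicity_dvd')
  have psN: "p^s dvd N" unfolding N_def using sR by (simp add: le_imp_power_dvd)
  have psn: "p^s dvd n" using psj psN nj by (metis dvd_add_left_iff)
  have nunit: "\<not> is_unit p" using p2 by simp
  have lv: "p^i dvd (n+j) \<and> \<not> p^i dvd j" if "s < i" "i \<le> R" for i
  proof
    show "p^i dvd (n+j)" unfolding nj N_def using that by (simp add: le_imp_power_dvd)
    have j0: "j \<noteq> 0" using that unfolding s_def by (cases "j = 0") auto
    then have "s = multiplicity p j" using that unfolding s_def by auto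
    then have "\<not> i \<le> multiplicity p j" using that by linarith
    then show "\<not> p^i dvd j" by (subst power_dvd_iff_le_multiplicity[OF j0 nunit])
  qed
  define A where "A = ((2*n) choose n)^2 * (n choose j)"
  define B where "B = ((2*(p*n)) choose (p*n))^2 * ((p*n) choose (p*j))"
  define U where "U = (FF p (2*n))^2"
  define D where "D = (FF p n)^3 * FF p j * FF p (n-j)"
  have gA: "g j (m * p ^ (r - 1)) = A"
    unfolding g_def A_def n_def N_def R_def ..
  have "m * p^r - j*p = p*n" unfolding n_def N_def rR
    by (simp add: diff_mult_distrib2 algebra_simps)
  then have gB: "g (j * p) (m * p ^ r) = B"
    unfolding g_def B_def by (simp add: mult.commute)
  have fp: "fact (p*x) = p^x * fact x * FF p x" for x using fact_mult_p[OF p0] .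
  have E1: "fact (p*n) * fact (p*n) * ((2*(p*n)) choose (p*n)) = (fact (2*(p*n)) :: nat)"
  proof -
    have "2*(p*n) - p*n = p*n" by simp
    then show ?thesis using binomial_fact_lemma[of "p*n" "2*(p*n)"] by (simp only:)
  qed
  have pnj: "p*n - p*j = p*(n-j)" by (simp add: diff_mult_distrib2)
  have E2: "fact (p*j) * fact (p*(n-j)) * ((p*n) choose (p*j)) = (fact (p*n) :: nat)"
    using binomial_fact_lemma[of "p*j" "p*n"] jn pnj by simp
  have h1: "B * (fact (p*n)^4 * fact (p*j) * fact (p*(n-j))) = fact (p*(2*n))^2 * (fact (p*n) :: nat)"
  proof -
    have "B * (fact (p*n)^4 * fact (p*j) * fact (p*(n-j)))
       = (fact (p*n) * fact (p*n) * ((2*(p*n)) choose (p*n)))^2 *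
         (fact (p*j) * fact (p*(n-j)) * ((p*n) choose (p*j)))"
      unfolding B_def by (simp add: algebra_simps power2_eq_square eval_nat_numeral)
    also have "\<dots> = fact (p*(2*n))^2 * fact (p*n)" unfolding E1 E2 by (simp add: ac_simps)
    finally show ?thesis .
  qed
  have E1': "fact n * fact n * ((2*n) choose n) = (fact (2*n) :: nat)"
    using binomial_fact_lemma[of n "2*n"] by simp
  have E2': "fact j * fact (n-j) * (n choose j) = (fact n :: nat)"
    using binomial_fact_lemma[OF jn] by simp
  have h2: "A * (fact n^4 * fact j * fact (n-j)) = fact (2*n)^2 * (fact n :: nat)"
  proof -
    have "A * (fact n^4 * fact j * fact (n-j))
       = (fact n * fact n * ((2*n) choose n))^2 * (fact j * fact (n-j) * (n choose j))"
      unfolding A_def by (simp add: algebra_simps power2_eq_square eval_nat_numeral)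
    also have "\<dots> = fact (2*n)^2 * fact n" unfolding E1' E2' by (simp add: ac_simps)
    finally show ?thesis .
  qed
  have Fnz: "FF p x \<noteq> 0" for x using not_dvd_FF[OF p] by (metis dvd_0_right)
  have BD: "B * D = A * U"
    unfolding D_def U_def
  proof (rule my_alg[where Pa = "p^n" and Pb = "p^(2*n)" and Pj = "p^j" and Pnj = "p^(n-j)"
        and fn = "fact n" and fj = "fact j" and fnj = "fact (n-j)" and fb = "fact (2*n)"])
    show "B * ((p ^ n * fact n * FF p n) ^ 4 * (p ^ j * fact j * FF p j) *
        (p ^ (n - j) * fact (n - j) * FF p (n - j))) =
        (p ^ (2 * n) * fact (2 * n) * FF p (2 * n))\<^sup>2 * (p ^ n * fact n * FF p n)"
      using h1 unfolding fp .
    show "A * (fact n ^ 4 * fact j * fact (n - j)) = (fact (2 * n))\<^sup>2 * fact n" by (rule h2)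
    show "p ^ j * p ^ (n - j) = p ^ n" using jn by (simp flip: power_add)
    show "p ^ (2 * n) = p ^ n * p ^ n" by (simp flip: power_add add: mult_2)
  qed (use p0 Fnz in auto)
  obtain n' where n': "n = p^s * n'" using psn by blast
  obtain j' where j': "j = p^s * j'" using psj by blast
  have j'n': "j' \<le> n'" using jn n' j' p0 by simp
  define W where "W = FF p (p^s)"
  have Fc: "[FF p (c * p^s) = W^c] (mod p^Suc s)" for c unfolding W_def by (rule FF_block)
  have "[U = (W^(2*n'))^2] (mod p^Suc s)"
    unfolding U_def using Fc[of "2*n'"] n' by (simp add: cong_pow ac_simps)
  moreover have "[D = (W^n')^3 * W^j' * W^(n'-j')] (mod p^Suc s)"
  proof -
    have a: "n - j = (n'-j') * p^s" using n' j' by (simp add: diff_mult_distrib mult.commute)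
    show ?thesis unfolding D_def a
      using Fc[of n'] Fc[of j'] Fc[of "n'-j'"] n' j'
      by (intro cong_mult cong_pow) (simp_all add: ac_simps)
  qed
  moreover have "(W^(2*n'))^2 = (W^n')^3 * W^j' * W^(n'-j')"
    using j'n' by (simp flip: power_add power_mult add: algebra_simps)
  ultimately have UD: "[U = D] (mod p^Suc s)" by (metis cong_sym cong_trans)
  have "p^(R - s) dvd ((2*n) choose n) * (n choose j)"
    by (rule binom_dvd[OF p jn sR lv])
  moreover have "A = ((2*n) choose n) * (((2*n) choose n) * (n choose j))"
    unfolding A_def by (simp add: power2_eq_square mult.assoc)
  ultimately have dA: "p^(R-s) dvd A" by (simp add: dvd_mult)
  then obtain k where k: "A = p^(R-s) * k" by blast
  have "[p^(R-s) * U = p^(R-s) * D] (mod p^(R-s) * p^Suc s)"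
    using UD unfolding cong_def by (simp add: mod_mult_mult1)
  moreover have "p^(R-s) * p^Suc s = p^r" using sR rR by (simp flip: power_add)
  ultimately have "[p^(R-s) * U = p^(R-s) * D] (mod p^r)" by simp
  then have "[A * U = A * D] (mod p^r)" unfolding k
    by (metis cong_scalar_right mult.assoc mult.commute)
  then have "[B * D = A * D] (mod p^r)" using BD by simp
  then have "[B = A] (mod p^r)"
  proof -
    have cD: "coprime D (p^r)" unfolding D_def
      using coprime_FF[OF p, of n r] coprime_FF[OF p, of j r] coprime_FF[OF p, of "n-j" r]
      by (simp add: coprime_power_left_iff) blast
    show ?thesis using cong_mult_rcancel_nat[OF cD] \<open>[B * D = A * D] (mod p^r)\<close> by simp
  qed
  then show ?thesis using gA gB by simp
qed


end
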